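(* Let $\mathcal{M}$ be a non-degenerate exactly solvable operator of order $M\ge2$ and let $U\subset\Omega$ be a simply connected open set. Then every WKB formal solution of $\mathcal{M}v=\eta^Mv$ is pre-Borel-summable in $U$.
   Context: $\mathcal{M}=\sum_{k=1}^{M}\rho_k(z)\frac{d^k}{dz^k}$ with complex polynomials $\rho_k$, $\deg\rho_k\le k$, $\rho_M$ monic of degree $M$; $\Omega=\mathbb{C}\setminus\operatorname{supp}\mu^{\mathcal{M}}$, $\mu^{\mathcal{M}}$ being the weak limit of the root-counting measures of the monic eigenpolynomials of $\mathcal{M}$. $w_1$ is the branch of $\rho_M^{-1/M}$ on $\Omega$ with $w_1\sim1/z$ at $\infty$, $w_j=e^{2\pi i(j-1)/M}w_1$. A WKB formal solution (large parameter $\eta>0$) is a formal solution $\eta^{-1/2}\exp(\int_{z^*}^zS(\zeta,\eta)d\zeta)=\exp(\eta\int_{z^*}^zS_0)\sum_{n\ge0}f_n(z)\eta^{-(n+1/2)}$ with $S=\sum_{k\ge0}S_k\eta^{1-k}$, $S_0=w_j$ for some $j$, and $S_k$ holomorphic, determined recursively. A formal series $\exp(\eta\zeta(z))\sum_{n\ge0}f_n(z)\eta^{-(n+1/2)}$ with $\zeta,f_n$ holomorphic in $U$ is pre-Borel-summable in $U$ if for each compact $K\subset U$ there are constants $A_K,C_K$ with $\sup_K|f_n|<A_KC_K^n\Gamma(1+n)$ for all $n$. *)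

theory Defs
  imports "HOL-Analysis.Analysis" "HOL-Computational_Algebra.Polynomial"
    "HOL-Computational_Algebra.Formal_Power_Series"
begin

definition op_poly :: "(nat \<Rightarrow> complex poly) \<Rightarrow> nat \<Rightarrow> complex poly \<Rightarrow> complex poly" where
  "op_poly \<rho> Mo p = (\<Sum>k=1..Mo. \<rho> k * (pderiv ^^ k) p)"

definition nondeg_exactly_solvable :: "(nat \<Rightarrow> complex poly) \<Rightarrow> nat \<Rightarrow> bool" where
  "nondeg_exactly_solvable \<rho> Mo \<longleftrightarrow>
     (\<forall>k\<in>{1..Mo}. degree (\<rho> k) \<le> k) \<and> degree (\<rho> Mo) = Mo \<and> lead_coeff (\<rho> Mo) = 1"

definition monic_eigenpoly :: "(nat \<Rightarrow> complex poly) \<Rightarrow> nat \<Rightarrow> nat \<Rightarrow> complex poly \<Rightarrow> bool" where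
  "monic_eigenpoly \<rho> Mo n p \<longleftrightarrow> degree p = n \<and> lead_coeff p = 1 \<and>
     (\<exists>c::complex. op_poly \<rho> Mo p = smult c p)"

definition root_count_integral :: "complex poly \<Rightarrow> (complex \<Rightarrow> real) \<Rightarrow> real" where
  "root_count_integral p f =
     (\<Sum>x\<in>{x. poly p x = 0}. real (order x p) * f x) / real (degree p)"

definition is_root_limit_measure :: "(nat \<Rightarrow> complex poly) \<Rightarrow> nat \<Rightarrow> complex measure \<Rightarrow> bool" where
  "is_root_limit_measure \<rho> Mo \<mu> \<longleftrightarrow> finite_measure \<mu> \<and> sets \<mu> = sets borel \<and>
     (\<forall>p :: nat \<Rightarrow> complex poly. (\<forall>\<^sub>F n in sequentially. monic_eigenpoly \<rho> Mo n (p n)) \<longrightarrow>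
        (\<forall>f :: complex \<Rightarrow> real. continuous_on UNIV f \<and> bounded (range f) \<longrightarrow>
           (\<lambda>n. root_count_integral (p n) f) \<longlonglongrightarrow> integral\<^sup>L \<mu> f))"

definition msupp :: "complex measure \<Rightarrow> complex set" where
  "msupp \<mu> = {z. \<forall>e>0. emeasure \<mu> (ball z e) > 0}"

text \<open>Coefficients Y k n of Y_k = eps^k P_k(S), where P_0 = 1, P_{k+1} = S P_k + d/dz P_k,
  S = sum_i S_i eta^(1-i), eps = 1/eta; Y_0 = 1, Y_{k+1} = T Y_k + eps d/dz Y_k, T = sum_i S_i eps^i.\<close>
primrec wkb_Y :: "(nat \<Rightarrow> complex \<Rightarrow> complex) \<Rightarrow> nat \<Rightarrow> nat \<Rightarrow> complex \<Rightarrow> complex" where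
  "wkb_Y S 0 n z = (if n = 0 then 1 else 0)"
| "wkb_Y S (Suc k) n z =
     (\<Sum>i\<le>n. S i z * wkb_Y S k (n - i) z) +
     (if n = 0 then 0 else deriv (wkb_Y S k (n - 1)) z)"

text \<open>S solves the Riccati-type equation sum_{k=1}^{Mo} rho_k P_k(S) = eta^Mo formally on U,
  i.e. sum_k rho_k eps^(Mo-k) Y_k = 1 as power series in eps.\<close>
definition wkb_eq :: "(nat \<Rightarrow> complex poly) \<Rightarrow> nat \<Rightarrow> complex set \<Rightarrow> (nat \<Rightarrow> complex \<Rightarrow> complex) \<Rightarrow> bool" where
  "wkb_eq \<rho> Mo U S \<longleftrightarrow> (\<forall>z\<in>U. \<forall>n.
     (\<Sum>k\<in>{k\<in>{1..Mo}. Mo - k \<le> n}. poly (\<rho> k) z * wkb_Y S k (n - (Mo - k)) z)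
       = (if n = 0 then 1 else 0))"

text \<open>Coefficients f_n with eta^(-1/2) exp(int S) = exp(eta G_0) sum_n f_n eta^(-(n+1/2)),
  G_k the primitive of S_k vanishing at the base point.\<close>
definition wkb_f :: "(nat \<Rightarrow> complex \<Rightarrow> complex) \<Rightarrow> nat \<Rightarrow> complex \<Rightarrow> complex" where
  "wkb_f G n z = exp (G 1 z) *
     fps_nth (fps_compose (fps_exp 1) (Abs_fps (\<lambda>m. if m = 0 then 0 else G (m + 1) z))) n"

text \<open>Pre-Borel-summability of exp(eta zeta) sum f_n eta^(-(n+1/2)) in U.\<close>
definition pre_borel_summable :: "complex set \<Rightarrow> (complex \<Rightarrow> complex) \<Rightarrow> (nat \<Rightarrow> complex \<Rightarrow> complex) \<Rightarrow> bool" where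
  "pre_borel_summable U \<zeta> f \<longleftrightarrow> \<zeta> holomorphic_on U \<and> (\<forall>n. f n holomorphic_on U) \<and>
     (\<forall>K. compact K \<and> K \<subseteq> U \<longrightarrow>
        (\<exists>A C::real. \<forall>n. \<forall>z\<in>K. norm (f n z) < A * C ^ n * fact n))"

end

theory Submission
  imports Defs "HOL-Complex_Analysis.Complex_Analysis"
begin
lemma exp_comp_rec:
  fixes g :: "complex fps"
  assumes g0: "g$0 = 0"
  shows "of_nat (Suc n) * (fps_exp 1 oo g)$(Suc n) =
     (\<Sum>i=0..n. (fps_exp 1 oo g)$i * (of_nat (n - i + 1) * g$(n - i + 1)))"
proof -
  have "fps_deriv (fps_exp 1 oo g) = (fps_exp 1 oo g) * fps_deriv g"
    using fps_compose_deriv[OF g0, of "fps_exp 1"] by simp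
  hence "fps_deriv (fps_exp 1 oo g) $ n = ((fps_exp 1 oo g) * fps_deriv g) $ n" by simp
  thus ?thesis by (simp add: fps_mult_nth)
qed

lemma exp_comp_0:
  fixes g :: "complex fps"
  assumes g0: "g$0 = 0"
  shows "(fps_exp 1 oo g)$0 = 1"
  by (simp add: fps_compose_nth)

lemma geom_A: "(A::real) * (\<Sum>i<n. (A+1)^i) = (A+1)^n - 1"
  by (induction n) (auto simp: algebra_simps)

lemma fact_mult_le_real: "i \<le> n \<Longrightarrow> fact i * fact (n - i) \<le> (fact n :: real)"
proof -
  assume "i \<le> n"
  then have "fact i * fact (n - i) dvd (fact n :: nat)"
    using fact_fact_dvd_fact[of i "n - i"] by simp
  then have "fact i * fact (n - i) \<le> (fact n :: nat)"
    by (intro dvd_imp_le) auto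
  then show ?thesis
    by (metis of_nat_fact of_nat_le_iff of_nat_mult)
qed

lemma exp_gevrey:
  fixes g :: "complex fps" and A C :: real
  assumes g0: "g$0 = 0" and A: "A \<ge> 0" and C: "C \<ge> 1"
    and gb: "\<And>m. norm (g$m) \<le> A * C^m * fact m"
  shows "norm ((fps_exp 1 oo g) $ n) \<le> (C*(A+1))^n * fact n"
proof (induction n rule: less_induct)
  case (less n)
  define h where "h = fps_exp 1 oo g"
  show ?case
  proof (cases n)
    case 0
    then show ?thesis using exp_comp_0[OF g0] by simp
  next
    case (Suc m)
    have IH: "\<And>i. i \<le> m \<Longrightarrow> norm (h$i) \<le> (C*(A+1))^i * fact i"
      using less Suc h_def by auto
    have "real (Suc m) * norm (h$(Suc m)) = norm (of_nat (Suc m) * h$(Suc m))"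
      by (simp only: norm_mult norm_of_nat)
    also have "\<dots> = norm (\<Sum>i=0..m. h$i * (of_nat (m - i + 1) * g$(m - i + 1)))"
      using exp_comp_rec[OF g0, of m] h_def by simp
    also have "\<dots> \<le> (\<Sum>i=0..m. norm (h$i * (of_nat (m - i + 1) * g$(m - i + 1))))"
      by (rule norm_sum)
    also have "\<dots> \<le> (\<Sum>i=0..m. real (Suc m) * fact (Suc m) * (A * C^(Suc m) * (A+1)^i))"
    proof (rule sum_mono)
      fix i assume i: "i \<in> {0..m}"
      have "norm (h$i * (of_nat (m - i + 1) * g$(m - i + 1)))
          = norm (h$i) * (real (m - i + 1) * norm (g$(m - i + 1)))"
        by (simp only: norm_mult norm_of_nat)
      also have "\<dots> \<le> ((C*(A+1))^i * fact i) * (real (m - i + 1) * (A * C^(m - i + 1) * fact (m - i + 1)))"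
        apply (intro mult_mono IH gb) using i A C by auto
      also have "\<dots> = real (m - i + 1) * (fact i * fact (Suc m - i)) * (A * (C^i * C^(m - i + 1)) * (A+1)^i)"
      proof -
        have e1: "Suc m - i = m - i + 1" using i by simp
        have e2: "(C*(A+1))^i = C^i * (A+1)^i" by (simp add: power_mult_distrib)
        show ?thesis by (simp only: e1 e2 mult_ac)
      qed
      also have "C^i * C^(m - i + 1) = C^(Suc m)"
        using i by (simp flip: power_add)
      also have "real (m - i + 1) * (fact i * fact (Suc m - i)) * (A * C^(Suc m) * (A+1)^i)
          \<le> real (Suc m) * fact (Suc m) * (A * C^(Suc m) * (A+1)^i)"
        apply (intro mult_right_mono mult_mono fact_mult_le_real)
        using i A C by auto
      finally show "norm (h$i * (of_nat (m - i + 1) * g$(m - i + 1))) \<le> real (Suc m) * fact (Suc m) * (A * C^(Suc m) * (A+1)^i)" .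
    qed
    also have "\<dots> = real (Suc m) * fact (Suc m) * C^(Suc m) * (A * (\<Sum>i<Suc m. (A+1)^i))"
      by (simp only: lessThan_Suc_atMost atLeast0AtMost sum_distrib_left mult_ac)
    also have "\<dots> = real (Suc m) * fact (Suc m) * C^(Suc m) * ((A+1)^Suc m - 1)"
      by (simp only: geom_A)
    also have "\<dots> \<le> real (Suc m) * ((C*(A+1))^(Suc m) * fact (Suc m))"
    proof -
      have hh: "C^Suc m * ((A+1)^Suc m - 1) \<le> (C*(A+1))^Suc m"
        using C by (simp add: power_mult_distrib right_diff_distrib)
      then show ?thesis
        using mult_left_mono[OF hh, of "real (Suc m) * fact (Suc m)"]
        by (simp add: mult_ac)
    qed
    finally have "real (Suc m) * norm (h$(Suc m)) \<le> real (Suc m) * ((C*(A+1))^(Suc m) * fact (Suc m))" .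
    then show ?thesis using Suc h_def by (simp del: of_nat_Suc)
  qed
qed

lemma pow_bound3: "(1 + 1 / real (Suc p)) ^ p \<le> (3::real)"
proof -
  have "(1 + 1 / real (Suc p)) ^ p \<le> exp (1 / real (Suc p)) ^ p"
    by (intro power_mono) auto
  also have "\<dots> = exp (real p * (1 / real (Suc p)))"
    by (rule exp_of_nat_mult[symmetric])
  also have "\<dots> \<le> exp 1" by simp
  also have "\<dots> \<le> 3" by (rule exp_le)
  finally show ?thesis .
qed

lemma nagumo:
  fixes \<phi> :: "complex \<Rightarrow> complex" and R b :: real and p :: nat
  assumes hol: "\<phi> holomorphic_on ball z0 R"
    and bd: "\<And>z. z \<in> ball z0 R \<Longrightarrow> norm (\<phi> z) * (R - dist z0 z)^p \<le> b"
    and z: "z \<in> ball z0 R"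
  shows "norm (deriv \<phi> z) * (R - dist z0 z)^(Suc p) \<le> 6 * real (Suc p) * b"
proof -
  define d where "d = R - dist z0 z"
  have d0: "d > 0" using z d_def by simp
  have b0: "b \<ge> 0" using bd[OF z] d0 d_def by (smt (verit) mult_nonneg_nonneg norm_ge_zero zero_le_power)
  define r where "r = d / real (p + 2)"
  have r0: "r > 0" using d0 r_def by simp
  have "r \<le> d / 2" unfolding r_def using d0 by (intro divide_left_mono) auto
  then have rd: "r < d" using d0 by linarith
  have sub: "cball z r \<subseteq> ball z0 R"
  proof
    fix w assume "w \<in> cball z r"
    then have "dist z w \<le> r" by simp
    then have "dist z0 w \<le> dist z0 z + r" using dist_triangle[of z0 w z] by simp
    then show "w \<in> ball z0 R" using rd d_def by simp
  qed
  define B where "B = b * (1 + 1 / real (Suc p))^p / d^p"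
  have circ: "norm (\<phi> w) \<le> B" if w: "norm (z - w) = r" for w
  proof -
    have "w \<in> cball z r" using w by (simp add: dist_norm)
    then have wb: "w \<in> ball z0 R" using sub by blast
    have "dist z0 w \<le> dist z0 z + r" using dist_triangle[of z0 w z] w by (simp add: dist_norm)
    then have dw: "R - dist z0 w \<ge> d - r" using d_def by simp
    have drp: "d - r = d * real (Suc p) / real (p+2)"
      using r_def by (simp add: field_simps)
    have drpos: "d - r > 0" using rd by simp
    have "norm (\<phi> w) * (d - r)^p \<le> norm (\<phi> w) * (R - dist z0 w)^p"
      by (intro mult_left_mono power_mono) (use dw drpos in auto)
    also have "\<dots> \<le> b" by (rule bd[OF wb])
    finally have "norm (\<phi> w) \<le> b / (d - r)^p" using drpos by (simp add: field_simps)
    also have "b / (d - r)^p = B"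
    proof -
      have "(1 + 1 / real (Suc p)) = real (p+2) / real (Suc p)" by (simp add: field_simps)
      then show ?thesis unfolding B_def drp using d0
        by (simp add: field_simps power_divide power_mult_distrib flip: power_mult_distrib)
    qed
    finally show ?thesis .
  qed
  have "norm ((deriv ^^ 1) \<phi> z) \<le> fact 1 * B / r ^ 1"
    by (rule Cauchy_inequality[OF holomorphic_on_subset[OF hol] _ r0 circ])
       (use sub in \<open>auto intro!: holomorphic_on_imp_continuous_on holomorphic_on_subset[OF hol]\<close>)
  then have dB: "norm (deriv \<phi> z) \<le> B / r" by simp
  have "norm (deriv \<phi> z) * d^(Suc p) \<le> B / r * d^(Suc p)"
    using dB d0 by (intro mult_right_mono) auto
  also have "B / r * d^(Suc p) = b * (1 + 1 / real (Suc p))^p * real (p+2)"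
    unfolding B_def r_def using d0 by (simp add: field_simps)
  also have "\<dots> \<le> b * 3 * real (2 * Suc p)"
    by (intro mult_mono mult_left_mono pow_bound3) (use b0 in auto)
  also have "\<dots> = 6 * real (Suc p) * b" by (simp add: algebra_simps)
  finally show ?thesis unfolding d_def .
qed

lemma Y_dep: "(\<forall>i\<le>m. S i = S' i) \<Longrightarrow> wkb_Y S k m = wkb_Y S' k m"
proof (induction k arbitrary: m)
  case 0 then show ?case by (simp add: fun_eq_iff)
next
  case (Suc k)
  have e1: "wkb_Y S k (m - i) = wkb_Y S' k (m - i)" for i
    using Suc.IH[of "m - i"] Suc.prems by auto
  have e2: "wkb_Y S k (m - 1) = wkb_Y S' k (m - 1)"
    using Suc.IH[of "m - 1"] Suc.prems by auto
  show ?case using Suc.prems by (auto simp: fun_eq_iff e1 e2 intro!: sum.cong)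
qed

lemma Y_zero: "wkb_Y S k 0 z = S 0 z ^ k"
  by (induction k) auto

lemma sum_split_ends:
  fixes f :: "nat \<Rightarrow> 'a::comm_monoid_add"
  assumes "1 \<le> m"
  shows "(\<Sum>i\<le>m. f i) = f 0 + f m + (\<Sum>i\<in>{1..<m}. f i)"
proof -
  have "{..m} = insert 0 (insert m {1..<m})" using assms by auto
  then show ?thesis using assms by (simp add: add.assoc)
qed

lemma Y_split:
  assumes n: "1 \<le> n"
  shows "wkb_Y S k n z = wkb_Y (S(n := (\<lambda>_. 0))) k n z + of_nat k * S 0 z ^ (k - 1) * S n z"
proof (induction k)
  case 0 then show ?case using n by simp
next
  case (Suc k)
  define S' where "S' = S(n := (\<lambda>_. 0))"
  have S'i: "S' i = S i" if "i \<noteq> n" for i using that S'_def by simp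
  have mid: "S i z * wkb_Y S k (n - i) z = S' i z * wkb_Y S' k (n - i) z" if "i \<in> {1..<n}" for i
  proof -
    have "wkb_Y S k (n - i) = wkb_Y S' k (n - i)"
      by (rule Y_dep) (use that S'i in auto)
    then show ?thesis using that S'i by simp
  qed
  have dv: "wkb_Y S k (n - 1) = wkb_Y S' k (n - 1)"
    by (rule Y_dep) (use n S'i in auto)
  have s0: "S' 0 = S 0" using n S'i by simp
  have "wkb_Y S (Suc k) n z = S 0 z * wkb_Y S k n z + S n z * wkb_Y S k 0 z
      + (\<Sum>i\<in>{1..<n}. S i z * wkb_Y S k (n - i) z) + deriv (wkb_Y S k (n - 1)) z"
    using n by (simp add: sum_split_ends[OF n])
  also have "\<dots> = S 0 z * (wkb_Y S' k n z + of_nat k * S 0 z ^ (k - 1) * S n z) + S n z * S 0 z ^ k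
      + (\<Sum>i\<in>{1..<n}. S' i z * wkb_Y S' k (n - i) z) + deriv (wkb_Y S' k (n - 1)) z"
  proof -
    have IH: "wkb_Y S k n z = wkb_Y S' k n z + of_nat k * S 0 z ^ (k - 1) * S n z"
      using Suc.IH unfolding S'_def .
    have sm: "(\<Sum>i\<in>{1..<n}. S i z * wkb_Y S k (n - i) z) = (\<Sum>i\<in>{1..<n}. S' i z * wkb_Y S' k (n - i) z)"
      by (rule sum.cong) (auto simp: mid)
    show ?thesis by (simp only: IH sm dv Y_zero)
  qed
  also have "\<dots> = wkb_Y S' (Suc k) n z + of_nat (Suc k) * S 0 z ^ k * S n z"
  proof -
    have "S 0 z * (of_nat k * S 0 z ^ (k - 1) * S n z) = of_nat k * S 0 z ^ k * S n z"
      by (cases k) (auto simp: algebra_simps)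
    moreover have "wkb_Y S' (Suc k) n z = S' 0 z * wkb_Y S' k n z + S' n z * wkb_Y S' k 0 z
      + (\<Sum>i\<in>{1..<n}. S' i z * wkb_Y S' k (n - i) z) + deriv (wkb_Y S' k (n - 1)) z"
      using n by (simp add: sum_split_ends[OF n])
    moreover have "S' n z = 0" using S'_def by simp
    ultimately show ?thesis using s0 by (simp add: algebra_simps)
  qed
  finally show ?case unfolding S'_def by (simp only: diff_Suc_1)
qed

lemma S_formula:
  fixes \<rho> :: "nat \<Rightarrow> complex poly"
  assumes eq: "wkb_eq \<rho> Mo U S" and z: "z \<in> U" and n: "1 \<le> n" and Mo: "1 \<le> Mo"
    and lead: "poly (\<rho> Mo) z * S 0 z ^ Mo = 1"
  shows "of_nat Mo * S n z = - S 0 z *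
     (\<Sum>k\<in>{k\<in>{1..Mo}. Mo - k \<le> n}. poly (\<rho> k) z * wkb_Y (S(n := (\<lambda>_. 0))) k (n - (Mo - k)) z)"
proof -
  define S' where "S' = S(n := (\<lambda>_. 0))"
  define I where "I = {k\<in>{1..Mo}. Mo - k \<le> n}"
  have MoI: "Mo \<in> I" using Mo I_def by auto
  have trm: "poly (\<rho> k) z * wkb_Y S k (n - (Mo - k)) z =
      poly (\<rho> k) z * wkb_Y S' k (n - (Mo - k)) z +
      (if k = Mo then poly (\<rho> Mo) z * (of_nat Mo * S 0 z ^ (Mo - 1) * S n z) else 0)"
    if k: "k \<in> I" for k
  proof (cases "k = Mo")
    case True
    then show ?thesis using Y_split[OF n, of S Mo z] S'_def by (simp add: algebra_simps)
  next
    case False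
    then have "k < Mo" using k I_def by auto
    then have "wkb_Y S k (n - (Mo - k)) = wkb_Y S' k (n - (Mo - k))"
      using k I_def by (intro Y_dep) (auto simp: S'_def)
    then show ?thesis using False by simp
  qed
  have "0 = (\<Sum>k\<in>I. poly (\<rho> k) z * wkb_Y S k (n - (Mo - k)) z)"
    using eq z n unfolding wkb_eq_def I_def by auto
  also have "\<dots> = (\<Sum>k\<in>I. poly (\<rho> k) z * wkb_Y S' k (n - (Mo - k)) z) +
      poly (\<rho> Mo) z * (of_nat Mo * S 0 z ^ (Mo - 1) * S n z)"
  proof -
    have "(\<Sum>k\<in>I. poly (\<rho> k) z * wkb_Y S k (n - (Mo - k)) z) = (\<Sum>k\<in>I. poly (\<rho> k) z * wkb_Y S' k (n - (Mo - k)) z +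
      (if k = Mo then poly (\<rho> Mo) z * (of_nat Mo * S 0 z ^ (Mo - 1) * S n z) else 0))"
      by (rule sum.cong) (simp_all only: trm)
    also have "\<dots> = (\<Sum>k\<in>I. poly (\<rho> k) z * wkb_Y S' k (n - (Mo - k)) z) +
      poly (\<rho> Mo) z * (of_nat Mo * S 0 z ^ (Mo - 1) * S n z)"
      using MoI by (simp add: sum.distrib I_def)
    finally show ?thesis .
  qed
  finally have h: "(\<Sum>k\<in>I. poly (\<rho> k) z * wkb_Y S' k (n - (Mo - k)) z) =
      - (poly (\<rho> Mo) z * (of_nat Mo * S 0 z ^ (Mo - 1) * S n z))"
    by (simp add: eq_neg_iff_add_eq_0 add.commute)
  have "S 0 z * (poly (\<rho> Mo) z * (of_nat Mo * S 0 z ^ (Mo - 1) * S n z))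
       = of_nat Mo * S n z * (poly (\<rho> Mo) z * S 0 z ^ Mo)"
    using Mo by (cases Mo) (auto simp: algebra_simps)
  also have "\<dots> = of_nat Mo * S n z" using lead by simp
  finally show ?thesis using h unfolding S'_def I_def by simp
qed

lemma Y_hol:
  assumes D: "open D" and hol: "\<And>i. T i holomorphic_on D"
  shows "wkb_Y T k m holomorphic_on D"
proof (induction k arbitrary: m)
  case 0
  have "wkb_Y T 0 m = (\<lambda>z. if m = 0 then 1 else 0)" by (rule ext) simp
  then show ?case by simp
next
  case (Suc k)
  have e: "wkb_Y T (Suc k) m = (\<lambda>z. (\<Sum>i\<le>m. T i z * wkb_Y T k (m - i) z) +
     (if m = 0 then 0 else deriv (wkb_Y T k (m - 1)) z))" by (rule ext) simp
  have h1: "(\<lambda>z. \<Sum>i\<le>m. T i z * wkb_Y T k (m - i) z) holomorphic_on D"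
    by (intro holomorphic_intros hol Suc.IH)
  have h2: "(\<lambda>z. if m = 0 then 0 else deriv (wkb_Y T k (m - 1)) z) holomorphic_on D"
    by (cases "m = 0") (auto intro: holomorphic_deriv[OF Suc.IH D])
  show ?case unfolding e by (intro holomorphic_on_add h1 h2)
qed

lemma fact_pair:
  assumes a: "1 \<le> a" and b: "1 \<le> b"
  shows "fact a * fact b \<le> (fact (a + b - 1) :: real)"
  using b
proof (induction b rule: nat_induct_at_least)
  case base then show ?case using a by simp
next
  case (Suc b)
  have "fact a * fact (Suc b) = real (Suc b) * (fact a * fact b)" by (simp add: algebra_simps)
  also have "\<dots> \<le> real (Suc b) * fact (a + b - 1)"
    using Suc a by (intro mult_left_mono) auto
  also have "\<dots> \<le> real (a + b) * fact (a + b - 1)"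
    using Suc a by (intro mult_right_mono) auto
  also have "\<dots> = fact (a + Suc b - 1)"
    using Suc a by (simp add: fact_reduce[of "a + b"])
  finally show ?case .
qed

lemma conv_bound:
  assumes "1 \<le> m"
  shows "(\<Sum>i\<in>{1..<m}. fact i * fact (m - i)) \<le> (fact m :: real)"
proof -
  have "(\<Sum>i\<in>{1..<m}. fact i * fact (m - i)) \<le> (\<Sum>i\<in>{1..<m}. (fact (m - 1) :: real))"
  proof (rule sum_mono)
    fix i assume i: "i \<in> {1..<m}"
    then show "fact i * fact (m - i) \<le> (fact (m - 1) :: real)"
      using fact_pair[of i "m - i"] by auto
  qed
  also have "\<dots> = real (m - 1) * fact (m - 1)" by simp
  also have "\<dots> \<le> real m * fact (m - 1)" by (intro mult_right_mono) auto
  also have "\<dots> = fact m" using assms by (simp add: fact_reduce[of m])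
  finally show ?thesis .
qed

lemma norm4: "norm (a + b + c + e) \<le> norm a + norm b + norm c + norm (e::'a::real_normed_vector)"
  by (meson add_mono_thms_linordered_semiring(3) norm_triangle_ineq order_trans)

lemma Y_triangle:
  fixes T :: "nat \<Rightarrow> complex \<Rightarrow> complex" and d :: real
  assumes m: "1 \<le> m" and d: "0 \<le> d"
  shows "norm (wkb_Y T (Suc k) m z) * d^m \<le>
    norm (T 0 z) * (norm (wkb_Y T k m z) * d^m) + (norm (T m z) * d^m) * norm (wkb_Y T k 0 z) +
    (\<Sum>i\<in>{1..<m}. (norm (T i z) * d^i) * (norm (wkb_Y T k (m - i) z) * d^(m - i))) +
    norm (deriv (wkb_Y T k (m - 1)) z) * d^m"
proof -
  have "wkb_Y T (Suc k) m z = T 0 z * wkb_Y T k m z + T m z * wkb_Y T k 0 z +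
     (\<Sum>i\<in>{1..<m}. T i z * wkb_Y T k (m - i) z) + deriv (wkb_Y T k (m - 1)) z"
    using m by (simp add: sum_split_ends[OF m])
  then have "norm (wkb_Y T (Suc k) m z) \<le> norm (T 0 z * wkb_Y T k m z) + norm (T m z * wkb_Y T k 0 z) +
     norm (\<Sum>i\<in>{1..<m}. T i z * wkb_Y T k (m - i) z) + norm (deriv (wkb_Y T k (m - 1)) z)"
    by (simp only: norm4)
  also have "norm (\<Sum>i\<in>{1..<m}. T i z * wkb_Y T k (m - i) z) \<le> (\<Sum>i\<in>{1..<m}. norm (T i z * wkb_Y T k (m - i) z))"
    by (rule norm_sum)
  finally have A: "norm (wkb_Y T (Suc k) m z) * d^m \<le> (norm (T 0 z * wkb_Y T k m z) + norm (T m z * wkb_Y T k 0 z) +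
     (\<Sum>i\<in>{1..<m}. norm (T i z * wkb_Y T k (m - i) z)) + norm (deriv (wkb_Y T k (m - 1)) z)) * d^m"
    using d by (intro mult_right_mono) auto
  have B: "(\<Sum>i\<in>{1..<m}. norm (T i z * wkb_Y T k (m - i) z)) * d^m =
     (\<Sum>i\<in>{1..<m}. (norm (T i z) * d^i) * (norm (wkb_Y T k (m - i) z) * d^(m - i)))"
    unfolding sum_distrib_right
  proof (rule sum.cong)
    fix i assume "i \<in> {1..<m}"
    then have "d^m = d^i * d^(m - i)" by (simp flip: power_add)
    then show "norm (T i z * wkb_Y T k (m - i) z) * d^m = (norm (T i z) * d^i) * (norm (wkb_Y T k (m - i) z) * d^(m - i))"
      by (simp add: norm_mult mult_ac)
  qed simp
  have C: "norm (T 0 z * wkb_Y T k m z) * d^m = norm (T 0 z) * (norm (wkb_Y T k m z) * d^m)"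
    by (simp add: norm_mult mult_ac)
  have D: "norm (T m z * wkb_Y T k 0 z) * d^m = (norm (T m z) * d^m) * norm (wkb_Y T k 0 z)"
    by (simp add: norm_mult mult_ac)
  show ?thesis using A unfolding distrib_right B C D .
qed

lemma deriv_level:
  fixes \<phi> :: "complex \<Rightarrow> complex"
  assumes hol: "\<phi> holomorphic_on ball z0 R"
    and bd: "\<And>w. w \<in> ball z0 R \<Longrightarrow> norm (\<phi> w) * (R - dist z0 w)^(m - 1) \<le> b"
    and z: "z \<in> ball z0 R" and m: "1 \<le> m"
  shows "norm (deriv \<phi> z) * (R - dist z0 z)^m \<le> 6 * real m * b"
  using nagumo[OF hol bd z] m by simp

lemma Y0_bound:
  assumes "norm (T 0 z) \<le> Q"
  shows "norm (wkb_Y T k 0 z) \<le> Q^k"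
  using assms by (simp add: Y_zero norm_power power_mono)

lemma Y_bound_full:
  fixes T :: "nat \<Rightarrow> complex \<Rightarrow> complex"
  assumes hol: "\<And>i. T i holomorphic_on ball z0 R"
   and T0: "\<And>z. z \<in> ball z0 R \<Longrightarrow> norm (T 0 z) \<le> Q"
   and Ti: "\<And>i z. 1 \<le> i \<Longrightarrow> i \<le> M \<Longrightarrow> z \<in> ball z0 R \<Longrightarrow> norm (T i z) * (R - dist z0 z)^i \<le> \<gamma> * (K^i * fact i)"
   and Q: "0 \<le> Q" and g0: "0 \<le> \<gamma>" and g1: "\<gamma> \<le> 1" and K: "1 \<le> K" and gK: "1 \<le> \<gamma> * K"
  shows "1 \<le> m \<Longrightarrow> m \<le> M \<Longrightarrow> z \<in> ball z0 R \<Longrightarrow>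
     norm (wkb_Y T k m z) * (R - dist z0 z)^m \<le> real k * (Q+7)^k * (\<gamma> * (K^m * fact m))"
proof (induction k arbitrary: m z)
  case 0 then show ?case by simp
next
  case (Suc k)
  define L where "L = Q + 7"
  define dz where "dz = R - dist z0 z"
  have m: "1 \<le> m" "m \<le> M" and z: "z \<in> ball z0 R" using Suc.prems by auto
  have dz: "0 < dz" using z dz_def by simp
  have L7: "7 \<le> L" using Q L_def by simp
  have QL: "Q^k \<le> L^k" using Q L_def by (intro power_mono) auto
  have Lk0: "0 \<le> L^k" using L7 by simp
  have W0: "0 \<le> K^j * fact j" for j using K by simp
  have IH: "norm (wkb_Y T k j w) * (R - dist z0 w)^j \<le> real k * L^k * (\<gamma> * (K^j * fact j))"
    if "1 \<le> j" "j \<le> M" "w \<in> ball z0 R" for j w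
    using Suc.IH[OF that] L_def by simp
  have t0: "norm (T 0 z) * (norm (wkb_Y T k m z) * dz^m) \<le> Q * (real k * L^k * (\<gamma> * (K^m * fact m)))"
    by (rule mult_mono[OF T0[OF z]]) (use IH[OF m z] dz_def dz Q in auto)
  have tm: "(norm (T m z) * dz^m) * norm (wkb_Y T k 0 z) \<le> (\<gamma> * (K^m * fact m)) * Q^k"
    by (rule mult_mono[OF _ Y0_bound[of T z Q k, OF T0[OF z]]]) (use Ti[OF m z] dz_def dz g0 W0 in auto)
  have tmid: "(\<Sum>i\<in>{1..<m}. (norm (T i z) * dz^i) * (norm (wkb_Y T k (m - i) z) * dz^(m - i)))
      \<le> \<gamma> * (real k * L^k * (\<gamma> * (K^m * fact m)))"
  proof -
    have "(\<Sum>i\<in>{1..<m}. (norm (T i z) * dz^i) * (norm (wkb_Y T k (m - i) z) * dz^(m - i)))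
       \<le> (\<Sum>i\<in>{1..<m}. (\<gamma> * (K^i * fact i)) * (real k * L^k * (\<gamma> * (K^(m-i) * fact (m-i)))))"
    proof (rule sum_mono)
      fix i assume i: "i \<in> {1..<m}"
      show "(norm (T i z) * dz^i) * (norm (wkb_Y T k (m - i) z) * dz^(m - i))
         \<le> (\<gamma> * (K^i * fact i)) * (real k * L^k * (\<gamma> * (K^(m-i) * fact (m-i))))"
      proof (rule mult_mono)
        show "norm (T i z) * dz^i \<le> \<gamma> * (K^i * fact i)" using Ti[of i z] i m z dz_def by auto
        show "norm (wkb_Y T k (m - i) z) * dz^(m - i) \<le> real k * L^k * (\<gamma> * (K^(m-i) * fact (m-i)))"
          using IH[of "m - i" z] i m z dz_def by auto
      qed (use dz g0 W0 in auto)
    qed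
    also have "\<dots> = (\<gamma> * (real k * L^k * \<gamma> * K^m)) * (\<Sum>i\<in>{1..<m}. fact i * fact (m - i))"
    proof -
      have pw: "(\<gamma> * (K^i * fact i)) * (real k * L^k * (\<gamma> * (K^(m-i) * fact (m-i))))
          = (\<gamma> * (real k * L^k * \<gamma> * K^m)) * (fact i * fact (m - i))" if "i \<in> {1..<m}" for i
      proof -
        have "K^i * K^(m-i) = K^m" using that by (simp flip: power_add)
        then show ?thesis by (simp add: mult_ac)
      qed
      show ?thesis unfolding sum_distrib_left by (rule sum.cong[OF refl pw])
    qed
    also have "\<dots> \<le> (\<gamma> * (real k * L^k * \<gamma> * K^m)) * fact m"
      by (intro mult_left_mono conv_bound m) (use g0 K Lk0 in auto)
    finally show ?thesis by (simp add: mult_ac)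
  qed
  have tder: "norm (deriv (wkb_Y T k (m - 1)) z) * dz^m \<le> 6 * (real k * L^k + Q^k) * (\<gamma> * (K^m * fact m))"
  proof (cases "m = 1")
    case True
    have "norm (deriv (wkb_Y T k (m - 1)) z) * dz^m \<le> 6 * real m * Q^k"
      unfolding dz_def
      by (rule deriv_level[OF Y_hol[of "ball z0 R" T k "m - 1", OF open_ball hol] _ z m(1)]) (use True T0 Y0_bound in auto)
    also have "\<dots> \<le> 6 * Q^k * (\<gamma> * K)"
      using True mult_left_mono[OF gK, of "6 * Q^k"] Q by simp
    also have "\<dots> \<le> 6 * (real k * L^k + Q^k) * (\<gamma> * (K^m * fact m))"
      using True Lk0 Q gK by (simp add: mult_right_mono)
    finally show ?thesis .
  next
    case False
    then have m2: "1 \<le> m - 1" "m - 1 \<le> M" using m by auto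
    have "norm (deriv (wkb_Y T k (m - 1)) z) * dz^m \<le> 6 * real m * (real k * L^k * (\<gamma> * (K^(m-1) * fact (m-1))))"
      unfolding dz_def
      by (rule deriv_level[OF Y_hol[of "ball z0 R" T k "m - 1", OF open_ball hol] _ z m(1)]) (use IH[OF m2] in auto)
    also have "\<dots> = 6 * (real k * L^k) * (\<gamma> * (K^(m-1) * (real m * fact (m-1))))"
      by (simp add: mult_ac)
    also have "real m * fact (m-1) = (fact m :: real)" using m by (simp add: fact_reduce[of m])
    also have "6 * (real k * L^k) * (\<gamma> * (K^(m-1) * fact m)) \<le> 6 * (real k * L^k) * (\<gamma> * (K^m * fact m))"
      by (intro mult_left_mono mult_right_mono power_increasing) (use K g0 Lk0 in auto)
    also have "\<dots> \<le> 6 * (real k * L^k + Q^k) * (\<gamma> * (K^m * fact m))"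
      by (intro mult_right_mono) (use Q g0 W0 in auto)
    finally show ?thesis .
  qed
  have "norm (wkb_Y T (Suc k) m z) * dz^m \<le>
      Q * (real k * L^k * (\<gamma> * (K^m * fact m))) + (\<gamma> * (K^m * fact m)) * Q^k
      + \<gamma> * (real k * L^k * (\<gamma> * (K^m * fact m)))
      + 6 * (real k * L^k + Q^k) * (\<gamma> * (K^m * fact m))"
    using Y_triangle[OF m(1), of dz T k z] dz t0 tm tmid tder by linarith
  also have "\<dots> = (Q * (real k * L^k) + Q^k + \<gamma> * (real k * L^k) + 6 * (real k * L^k + Q^k)) * (\<gamma> * (K^m * fact m))"
    by (simp add: algebra_simps)
  also have "\<dots> \<le> real (Suc k) * L^(Suc k) * (\<gamma> * (K^m * fact m))"
  proof (rule mult_right_mono)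
    have "\<gamma> * (real k * L^k) \<le> real k * L^k" using g1 g0 Lk0 by (simp add: mult_left_le_one_le)
    then have "Q * (real k * L^k) + Q^k + \<gamma> * (real k * L^k) + 6 * (real k * L^k + Q^k)
        \<le> (Q + 7) * (real k * L^k) + 7 * L^k" using QL by (simp add: algebra_simps)
    also have "\<dots> \<le> L * (real k * L^k) + L * L^k" using L7 Lk0 L_def by (simp add: mult_right_mono)
    also have "\<dots> = real (Suc k) * L^(Suc k)" by (simp add: algebra_simps)
    finally show "Q * (real k * L^k) + Q^k + \<gamma> * (real k * L^k) + 6 * (real k * L^k + Q^k)
        \<le> real (Suc k) * L^(Suc k)" .
  qed (use g0 W0 in auto)
  finally show ?case unfolding dz_def L_def .
qed

lemma Y_bound_top:
  fixes T :: "nat \<Rightarrow> complex \<Rightarrow> complex"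
  assumes hol: "\<And>i. T i holomorphic_on ball z0 R"
   and T0: "\<And>z. z \<in> ball z0 R \<Longrightarrow> norm (T 0 z) \<le> Q"
   and Ti: "\<And>i z. 1 \<le> i \<Longrightarrow> i < n \<Longrightarrow> z \<in> ball z0 R \<Longrightarrow> norm (T i z) * (R - dist z0 z)^i \<le> \<gamma> * (K^i * fact i)"
   and Tn: "T n = (\<lambda>_. 0)" and n: "1 \<le> n"
   and Q: "0 \<le> Q" and g0: "0 \<le> \<gamma>" and g1: "\<gamma> \<le> 1" and K: "1 \<le> K" and gK: "1 \<le> \<gamma> * K"
  shows "z \<in> ball z0 R \<Longrightarrow>
     norm (wkb_Y T k n z) * (R - dist z0 z)^n \<le> (\<gamma> + 6 / K + 6 / (\<gamma> * K)) * real k * (Q+7)^k * (\<gamma> * (K^n * fact n))"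
proof (induction k arbitrary: z)
  case 0 then show ?case using n by simp
next
  case (Suc k)
  define L where "L = Q + 7"
  define \<theta> where "\<theta> = \<gamma> + 6 / K + 6 / (\<gamma> * K)"
  define dz where "dz = R - dist z0 z"
  have z: "z \<in> ball z0 R" using Suc.prems by auto
  have dz: "0 < dz" using z dz_def by simp
  have L7: "7 \<le> L" using Q L_def by simp
  have QL: "Q^k \<le> L^k" using Q L_def by (intro power_mono) auto
  have Lk0: "0 \<le> L^k" using L7 by simp
  have W0: "0 \<le> K^j * fact j" for j using K by simp
  have gpos: "0 < \<gamma>" using gK g0 by (cases "\<gamma> = 0") auto
  have th0: "0 \<le> \<theta>" unfolding \<theta>_def using g0 K by simp
  have IHf: "norm (wkb_Y T k j w) * (R - dist z0 w)^j \<le> real k * L^k * (\<gamma> * (K^j * fact j))"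
    if "1 \<le> j" "j \<le> n - 1" "w \<in> ball z0 R" for j w
  proof -
    have Ti': "norm (T i y) * (R - dist z0 y)^i \<le> \<gamma> * (K^i * fact i)"
      if "1 \<le> i" "i \<le> n - 1" "y \<in> ball z0 R" for i y
      using Ti[of i y] that n by auto
    show ?thesis using Y_bound_full[OF hol T0 Ti' Q g0 g1 K gK that] L_def by simp
  qed
  have IH: "norm (wkb_Y T k n z) * dz^n \<le> \<theta> * real k * L^k * (\<gamma> * (K^n * fact n))"
    using Suc.IH[OF z] L_def \<theta>_def dz_def by simp
  have t0: "norm (T 0 z) * (norm (wkb_Y T k n z) * dz^n) \<le> Q * (\<theta> * real k * L^k * (\<gamma> * (K^n * fact n)))"
    by (rule mult_mono[OF T0[OF z]]) (use IH dz Q in auto)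
  have tm: "(norm (T n z) * dz^n) * norm (wkb_Y T k 0 z) = 0" using Tn by simp
  have tmid: "(\<Sum>i\<in>{1..<n}. (norm (T i z) * dz^i) * (norm (wkb_Y T k (n - i) z) * dz^(n - i)))
      \<le> \<gamma> * (real k * L^k * (\<gamma> * (K^n * fact n)))"
  proof -
    have "(\<Sum>i\<in>{1..<n}. (norm (T i z) * dz^i) * (norm (wkb_Y T k (n - i) z) * dz^(n - i)))
       \<le> (\<Sum>i\<in>{1..<n}. (\<gamma> * (K^i * fact i)) * (real k * L^k * (\<gamma> * (K^(n-i) * fact (n-i)))))"
    proof (rule sum_mono)
      fix i assume i: "i \<in> {1..<n}"
      show "(norm (T i z) * dz^i) * (norm (wkb_Y T k (n - i) z) * dz^(n - i))
         \<le> (\<gamma> * (K^i * fact i)) * (real k * L^k * (\<gamma> * (K^(n-i) * fact (n-i))))"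
      proof (rule mult_mono)
        show "norm (T i z) * dz^i \<le> \<gamma> * (K^i * fact i)" using Ti[of i z] i z dz_def by auto
        show "norm (wkb_Y T k (n - i) z) * dz^(n - i) \<le> real k * L^k * (\<gamma> * (K^(n-i) * fact (n-i)))"
          using IHf[of "n - i" z] i z dz_def by auto
      qed (use dz g0 W0 in auto)
    qed
    also have "\<dots> = (\<gamma> * (real k * L^k * \<gamma> * K^n)) * (\<Sum>i\<in>{1..<n}. fact i * fact (n - i))"
    proof -
      have pw: "(\<gamma> * (K^i * fact i)) * (real k * L^k * (\<gamma> * (K^(n-i) * fact (n-i))))
          = (\<gamma> * (real k * L^k * \<gamma> * K^n)) * (fact i * fact (n - i))" if "i \<in> {1..<n}" for i
      proof -
        have "K^i * K^(n-i) = K^n" using that by (simp flip: power_add)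
        then show ?thesis by (simp add: mult_ac)
      qed
      show ?thesis unfolding sum_distrib_left by (rule sum.cong[OF refl pw])
    qed
    also have "\<dots> \<le> (\<gamma> * (real k * L^k * \<gamma> * K^n)) * fact n"
      by (intro mult_left_mono conv_bound n) (use g0 K Lk0 in auto)
    finally show ?thesis by (simp add: mult_ac)
  qed
  have tder: "norm (deriv (wkb_Y T k (n - 1)) z) * dz^n \<le> (6 / K * (real k * L^k) + 6 / (\<gamma> * K) * Q^k) * (\<gamma> * (K^n * fact n))"
  proof (cases "n = 1")
    case True
    have "norm (deriv (wkb_Y T k (n - 1)) z) * dz^n \<le> 6 * real n * Q^k"
      unfolding dz_def
      by (rule deriv_level[OF Y_hol[of "ball z0 R" T k "n - 1", OF open_ball hol] _ z n]) (use True T0 Y0_bound in auto)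
    also have "\<dots> = 6 / (\<gamma> * K) * Q^k * (\<gamma> * (K^n * fact n))"
      using True gpos K by simp
    also have "\<dots> \<le> (6 / K * (real k * L^k) + 6 / (\<gamma> * K) * Q^k) * (\<gamma> * (K^n * fact n))"
      by (intro mult_right_mono) (use Lk0 K g0 W0 in auto)
    finally show ?thesis .
  next
    case False
    then have m2: "1 \<le> n - 1" "n - 1 \<le> n - 1" using n by auto
    have "norm (deriv (wkb_Y T k (n - 1)) z) * dz^n \<le> 6 * real n * (real k * L^k * (\<gamma> * (K^(n-1) * fact (n-1))))"
      unfolding dz_def
      by (rule deriv_level[OF Y_hol[of "ball z0 R" T k "n - 1", OF open_ball hol] _ z n]) (use IHf[OF m2] in auto)
    also have "\<dots> = 6 * (real k * L^k) * (\<gamma> * (K^(n-1) * (real n * fact (n-1))))"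
      by (simp add: mult_ac)
    also have "real n * fact (n-1) = (fact n :: real)" using n by (simp add: fact_reduce[of n])
    also have "K^(n-1) = K^n / K" using n K by (simp add: power_eq_if)
    also have "6 * (real k * L^k) * (\<gamma> * (K^n / K * fact n)) = 6 / K * (real k * L^k) * (\<gamma> * (K^n * fact n))"
      by (simp add: field_simps)
    also have "\<dots> \<le> (6 / K * (real k * L^k) + 6 / (\<gamma> * K) * Q^k) * (\<gamma> * (K^n * fact n))"
      by (intro mult_right_mono) (use Q g0 W0 K in auto)
    finally show ?thesis .
  qed
  have "norm (wkb_Y T (Suc k) n z) * dz^n \<le>
      Q * (\<theta> * real k * L^k * (\<gamma> * (K^n * fact n))) + 0
      + \<gamma> * (real k * L^k * (\<gamma> * (K^n * fact n)))
      + (6 / K * (real k * L^k) + 6 / (\<gamma> * K) * Q^k) * (\<gamma> * (K^n * fact n))"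
    using Y_triangle[OF n, of dz T k z] dz t0 tm tmid tder by linarith
  also have "\<dots> = (Q * \<theta> * (real k * L^k) + (\<gamma> + 6 / K) * (real k * L^k) + 6 / (\<gamma> * K) * Q^k) * (\<gamma> * (K^n * fact n))"
    by (simp add: algebra_simps)
  also have "\<dots> \<le> \<theta> * real (Suc k) * L^(Suc k) * (\<gamma> * (K^n * fact n))"
  proof (rule mult_right_mono)
    have a: "(\<gamma> + 6 / K) * (real k * L^k) \<le> \<theta> * (real k * L^k)"
      unfolding \<theta>_def by (intro mult_right_mono) (use gpos K Lk0 in auto)
    have b: "6 / (\<gamma> * K) * Q^k \<le> \<theta> * L^k"
      unfolding \<theta>_def by (intro mult_mono QL) (use gpos K Lk0 Q in auto)
    have "Q * \<theta> * (real k * L^k) + (\<gamma> + 6 / K) * (real k * L^k) + 6 / (\<gamma> * K) * Q^k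
        \<le> \<theta> * ((Q + 1) * (real k * L^k) + L^k)" using a b by (simp add: algebra_simps)
    also have "\<dots> \<le> \<theta> * (L * (real k * L^k) + L * L^k)"
      by (intro mult_left_mono add_mono mult_right_mono) (use L7 Lk0 L_def th0 in auto)
    also have "\<dots> = \<theta> * real (Suc k) * L^(Suc k)" by (simp add: algebra_simps)
    finally show "Q * \<theta> * (real k * L^k) + (\<gamma> + 6 / K) * (real k * L^k) + 6 / (\<gamma> * K) * Q^k
        \<le> \<theta> * real (Suc k) * L^(Suc k)" .
  qed (use g0 W0 in auto)
  finally show ?case unfolding dz_def L_def \<theta>_def .
qed

lemma W_mono:
  fixes K :: real
  assumes K: "1 \<le> K" and mn: "m \<le> n - 1" and n: "1 \<le> n"
  shows "K^m * fact m \<le> K^n * fact n / K"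
proof -
  have "K^m * fact m \<le> K^(n-1) * fact (n-1)"
    by (intro mult_mono power_increasing fact_mono) (use K mn in auto)
  also have "\<dots> \<le> K^(n-1) * fact n"
    by (intro mult_left_mono fact_mono) (use K in auto)
  also have "\<dots> = K^n * fact n / K"
    using n K by (simp add: power_eq_if field_simps)
  finally show ?thesis .
qed

lemma S_local_bound:
  fixes S :: "nat \<Rightarrow> complex \<Rightarrow> complex" and r :: "nat \<Rightarrow> complex \<Rightarrow> complex"
  assumes hol: "\<And>i. S i holomorphic_on ball z0 R"
    and form: "\<And>n z. 1 \<le> n \<Longrightarrow> z \<in> ball z0 R \<Longrightarrow> of_nat Mo * S n z = - S 0 z *
        (\<Sum>k\<in>{k\<in>{1..Mo}. Mo - k \<le> n}. r k z * wkb_Y (S(n := (\<lambda>_. 0))) k (n - (Mo - k)) z)"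
    and S0: "\<And>z. z \<in> ball z0 R \<Longrightarrow> norm (S 0 z) \<le> Q"
    and rb: "\<And>k z. k \<in> {1..Mo} \<Longrightarrow> z \<in> ball z0 R \<Longrightarrow> norm (r k z) \<le> P0"
    and Q: "0 \<le> Q" and P0: "0 \<le> P0" and Mo: "1 \<le> Mo"
  shows "\<exists>\<gamma> K. 0 < \<gamma> \<and> 1 \<le> K \<and>
     (\<forall>n z. 1 \<le> n \<longrightarrow> z \<in> ball z0 R \<longrightarrow> norm (S n z) * (R - dist z0 z)^n \<le> \<gamma> * (K^n * fact n))"
proof -
  define P where "P = P0 * (max 1 R)^Mo"
  define L where "L = Q + 7"
  define E where "E = Q * P * real Mo * L^Mo + 1"
  define \<gamma> where "\<gamma> = 1 / (3 * E)"
  define K where "K = 54 * E^2"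
  define \<theta> where "\<theta> = \<gamma> + 6 / K + 6 / (\<gamma> * K)"
  have P: "0 \<le> P" using P0 P_def by simp
  have L: "1 \<le> L" using Q L_def by simp
  have E1: "1 \<le> E" using E_def Q P L by simp
  have g0: "0 < \<gamma>" using E1 \<gamma>_def by simp
  have g1: "\<gamma> \<le> 1" using E1 \<gamma>_def by simp
  have "1 \<le> E^2" using E1 by (simp add: one_le_power)
  then have K1: "1 \<le> K" using K_def by simp
  have gK: "\<gamma> * K = 18 * E" using E1 \<gamma>_def K_def by (simp add: power2_eq_square field_simps)
  have gK1: "1 \<le> \<gamma> * K" using gK E1 by simp
  have th: "\<theta> \<le> 1 / E"
  proof -
    have "6 / K = 1 / (9 * E^2)" using K_def E1 by simp
    also have "\<dots> \<le> 1 / (3 * E)" using E1 by (simp add: power2_eq_square field_simps)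
    finally have a: "6 / K \<le> 1 / (3 * E)" .
    have b: "6 / (\<gamma> * K) = 1 / (3 * E)" using gK E1 by simp
    show ?thesis unfolding \<theta>_def using a b \<gamma>_def by simp
  qed
  have th0: "0 \<le> \<theta>" unfolding \<theta>_def using g0 K1 by simp
  have pos1: "0 \<le> 6 / (\<gamma> * K)" "0 \<le> 6 / K" "1 / K \<le> 6 / K" using g0 K1 by (auto simp: divide_right_mono)
  have thK: "1 / K \<le> \<theta>" unfolding \<theta>_def using g0 pos1 by linarith
  have thgK: "6 / (\<gamma> * K) \<le> \<theta>" unfolding \<theta>_def using g0 pos1 by linarith
  have key: "\<theta> * (Q * P * real Mo * L^Mo) \<le> 1"
  proof -
    have "\<theta> * (Q * P * real Mo * L^Mo) \<le> 1 / E * (Q * P * real Mo * L^Mo)"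
      by (intro mult_right_mono th) (use Q P L in auto)
    also have "\<dots> \<le> 1" using E_def E1 by (simp add: field_simps)
    finally show ?thesis .
  qed
  have main: "\<forall>z. z \<in> ball z0 R \<longrightarrow> norm (S n z) * (R - dist z0 z)^n \<le> \<gamma> * (K^n * fact n)"
    if "1 \<le> n" for n
    using that
  proof (induction n rule: less_induct)
    case (less n)
    have n: "1 \<le> n" using less.prems .
    define T where "T = S(n := (\<lambda>_. 0))"
    have Thol: "T i holomorphic_on ball z0 R" for i
      unfolding T_def by (cases "i = n") (auto simp: hol)
    have T0: "norm (T 0 z) \<le> Q" if "z \<in> ball z0 R" for z
      using S0[OF that] n T_def by simp
    have Ti: "norm (T i z) * (R - dist z0 z)^i \<le> \<gamma> * (K^i * fact i)"
      if "1 \<le> i" "i < n" "z \<in> ball z0 R" for i z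
      using less.IH[of i] that T_def by auto
    have Tn: "T n = (\<lambda>_. 0)" using T_def by simp
    have W0: "0 \<le> K^j * fact j" for j using K1 by simp
    have Wn: "K \<le> K^n * fact n"
    proof -
      have "K = K^1 * 1" by simp
      also have "\<dots> \<le> K^n * fact n"
        by (intro mult_mono power_increasing) (use n K1 in \<open>auto simp: fact_ge_1\<close>)
      finally show ?thesis .
    qed
    show ?case
    proof (intro allI impI)
      fix z assume z: "z \<in> ball z0 R"
      define dz where "dz = R - dist z0 z"
      have dz: "0 < dz" "dz \<le> R" using z dz_def by auto
      define I where "I = {k\<in>{1..Mo}. Mo - k \<le> n}"
      define \<tau> where "\<tau> = P * (\<theta> * real Mo * L^Mo * (\<gamma> * (K^n * fact n)))"
      have LkM: "L^k \<le> L^Mo" if "k \<le> Mo" for k using L that by (intro power_increasing) auto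
      have trm: "norm (r k z * wkb_Y T k (n - (Mo - k)) z) * dz^n \<le> \<tau>" if k: "k \<in> I" for k
      proof -
        define m where "m = n - (Mo - k)"
        have k1: "1 \<le> k" "k \<le> Mo" "Mo - k \<le> n" using k I_def by auto
        have split: "dz^n = dz^(Mo - k) * dz^m" using k1 m_def by (simp flip: power_add)
        have rpart: "norm (r k z) * dz^(Mo - k) \<le> P"
        proof -
          have "dz^(Mo - k) \<le> (max 1 R)^(Mo - k)" using dz by (intro power_mono) auto
          also have "\<dots> \<le> (max 1 R)^Mo" by (intro power_increasing) auto
          finally have "dz^(Mo - k) \<le> (max 1 R)^Mo" .
          then show ?thesis unfolding P_def
            by (intro mult_mono rb) (use k1 z dz P0 in auto)
        qed
        have ypart: "norm (wkb_Y T k m z) * dz^m \<le> \<theta> * real Mo * L^Mo * (\<gamma> * (K^n * fact n))"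
        proof (cases "k = Mo")
          case True
          then have "m = n" using m_def by simp
          have "norm (wkb_Y T k m z) * dz^m \<le> \<theta> * real k * (Q+7)^k * (\<gamma> * (K^n * fact n))"
            unfolding \<open>m = n\<close> dz_def \<theta>_def
            by (rule Y_bound_top[OF Thol T0 Ti Tn n Q _ g1 K1 gK1 z]) (use g0 in auto)
          then show ?thesis using True L_def by simp
        next
          case False
          then have kM: "k < Mo" using k1 by simp
          show ?thesis
          proof (cases "m = 0")
            case True
            have "norm (wkb_Y T k m z) * dz^m \<le> Q^k" using True Y0_bound[of T z Q k, OF T0[OF z]] by simp
            also have "\<dots> \<le> L^Mo" using Q L_def k1 LkM
              by (meson order_trans power_mono le_add_same_cancel1 zero_le_numeral)
            also have "\<dots> \<le> \<theta> * real Mo * L^Mo * (\<gamma> * (K^n * fact n))"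
            proof -
              have "1 \<le> 6 / (\<gamma> * K) * (\<gamma> * K)" using g0 K1 by simp
              also have "\<dots> \<le> \<theta> * (\<gamma> * (K^n * fact n))"
                by (intro mult_mono thgK mult_left_mono Wn) (use g0 th0 K1 in auto)
              also have "\<dots> \<le> \<theta> * real Mo * (\<gamma> * (K^n * fact n))"
              proof -
                have "\<theta> * (\<gamma> * (K^n * fact n)) * 1 \<le> \<theta> * (\<gamma> * (K^n * fact n)) * real Mo"
                  by (intro mult_left_mono) (use Mo th0 g0 W0 in auto)
                then show ?thesis by (simp add: mult_ac)
              qed
              finally have "1 \<le> \<theta> * real Mo * (\<gamma> * (K^n * fact n))" .
              then show ?thesis using L by (simp add: mult_ac mult_le_cancel_left1)
            qed
            finally show ?thesis .
          next
            case False
            then have m1: "1 \<le> m" "m \<le> n - 1" using m_def kM k1 by auto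
            have Ti': "norm (T i y) * (R - dist z0 y)^i \<le> \<gamma> * (K^i * fact i)"
              if "1 \<le> i" "i \<le> n - 1" "y \<in> ball z0 R" for i y
              using Ti[of i y] that n by auto
            have "norm (wkb_Y T k m z) * dz^m \<le> real k * (Q+7)^k * (\<gamma> * (K^m * fact m))"
              unfolding dz_def
              by (rule Y_bound_full[OF Thol T0 Ti' Q _ g1 K1 gK1 m1 z]) (use g0 in auto)
            also have "\<dots> \<le> real Mo * L^Mo * (\<gamma> * (K^n * fact n / K))"
              by (intro mult_mono mult_left_mono W_mono) (use k1 L_def LkM g0 K1 m1 n Q in auto)
            also have "\<dots> = 1 / K * real Mo * L^Mo * (\<gamma> * (K^n * fact n))" by simp
            also have "\<dots> \<le> \<theta> * real Mo * L^Mo * (\<gamma> * (K^n * fact n))"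
              by (intro mult_right_mono thK) (use L g0 W0 in auto)
            finally show ?thesis .
          qed
        qed
        have "norm (r k z * wkb_Y T k (n - (Mo - k)) z) * dz^n
            = (norm (r k z) * dz^(Mo - k)) * (norm (wkb_Y T k m z) * dz^m)"
          unfolding split m_def by (simp add: norm_mult mult_ac)
        also have "\<dots> \<le> P * (\<theta> * real Mo * L^Mo * (\<gamma> * (K^n * fact n)))"
          by (intro mult_mono rpart ypart) (use P dz in auto)
        finally show ?thesis unfolding \<tau>_def .
      qed
      have cardI: "card I \<le> Mo"
      proof -
        have "card I \<le> card {1..Mo}" unfolding I_def by (intro card_mono) auto
        then show ?thesis by simp
      qed
      have tau0: "0 \<le> \<tau>" unfolding \<tau>_def using P th0 L g0 W0 by simp
      have "real Mo * (norm (S n z) * dz^n) = norm (of_nat Mo * S n z) * dz^n"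
        by (simp add: norm_mult)
      also have "\<dots> = norm (S 0 z) * (norm (\<Sum>k\<in>I. r k z * wkb_Y T k (n - (Mo - k)) z) * dz^n)"
        using form[OF n z] unfolding T_def I_def by (simp add: norm_mult norm_minus_cancel)
      also have "\<dots> \<le> Q * (real Mo * \<tau>)"
      proof (rule mult_mono)
        have "norm (\<Sum>k\<in>I. r k z * wkb_Y T k (n - (Mo - k)) z) * dz^n
            \<le> (\<Sum>k\<in>I. norm (r k z * wkb_Y T k (n - (Mo - k)) z)) * dz^n"
          by (intro mult_right_mono norm_sum) (use dz in auto)
        also have "\<dots> = (\<Sum>k\<in>I. norm (r k z * wkb_Y T k (n - (Mo - k)) z) * dz^n)"
          by (simp add: sum_distrib_right)
        also have "\<dots> \<le> (\<Sum>k\<in>I. \<tau>)" by (intro sum_mono trm)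
        also have "\<dots> = real (card I) * \<tau>" by simp
        also have "\<dots> \<le> real Mo * \<tau>" by (intro mult_right_mono) (use cardI tau0 in auto)
        finally show "norm (\<Sum>k\<in>I. r k z * wkb_Y T k (n - (Mo - k)) z) * dz^n \<le> real Mo * \<tau>" .
      qed (use S0[OF z] Q dz in auto)
      finally have "real Mo * (norm (S n z) * dz^n) \<le> real Mo * (Q * \<tau>)" by (simp add: mult_ac)
      then have "norm (S n z) * dz^n \<le> Q * \<tau>" using Mo by simp
      also have "Q * \<tau> = (\<theta> * (Q * P * real Mo * L^Mo)) * (\<gamma> * (K^n * fact n))"
        unfolding \<tau>_def by (simp add: mult_ac)
      also have "\<dots> \<le> 1 * (\<gamma> * (K^n * fact n))"
        by (intro mult_right_mono key) (use g0 W0 in auto)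
      finally show "norm (S n z) * (R - dist z0 z)^n \<le> \<gamma> * (K^n * fact n)" unfolding dz_def by simp
    qed
  qed
  show ?thesis using main g0 K1 by blast
qed

definition gev :: "(nat \<Rightarrow> complex \<Rightarrow> complex) \<Rightarrow> complex set \<Rightarrow> bool" where
  "gev F T \<longleftrightarrow> (\<exists>A C. 0 \<le> A \<and> 1 \<le> C \<and> (\<forall>n. \<forall>y\<in>T. norm (F n y) \<le> A * C^n * fact n))"

lemma cont_bound:
  fixes f :: "complex \<Rightarrow> 'b::real_normed_vector"
  assumes "continuous_on T f" "compact T"
  shows "\<exists>B\<ge>0. \<forall>z\<in>T. norm (f z) \<le> B"
proof -
  have "bounded (f ` T)" by (intro compact_imp_bounded compact_continuous_image assms)
  then obtain B where "B > 0" "\<forall>x\<in>f ` T. norm x \<le> B" by (auto simp: bounded_pos)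
  then show ?thesis by (intro exI[of _ B]) auto
qed

lemma local_gev:
  fixes \<rho> :: "nat \<Rightarrow> complex poly" and S :: "nat \<Rightarrow> complex \<Rightarrow> complex"
  assumes U: "open U" and hol: "\<And>k. S k holomorphic_on U" and eq: "wkb_eq \<rho> Mo U S"
    and lead: "\<And>z. z \<in> U \<Longrightarrow> poly (\<rho> Mo) z * S 0 z ^ Mo = 1" and Mo: "1 \<le> Mo" and z0: "z0 \<in> U"
  shows "\<exists>r>0. ball z0 r \<subseteq> U \<and> gev S (ball z0 r)"
proof -
  obtain R where R: "R > 0" "cball z0 R \<subseteq> U" using U z0 open_contains_cball by blast
  have bU: "ball z0 R \<subseteq> U" using R ball_subset_cball by blast
  obtain Q where Q: "Q \<ge> 0" "\<forall>z\<in>cball z0 R. norm (S 0 z) \<le> Q"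
    using cont_bound[of "cball z0 R" "S 0"] holomorphic_on_imp_continuous_on[OF holomorphic_on_subset[OF hol R(2)]]
    by auto
  obtain P0 where P0: "P0 \<ge> 0" "\<forall>z\<in>cball z0 R. norm (\<Sum>k\<in>{1..Mo}. norm (poly (\<rho> k) z)) \<le> P0"
  proof -
    have "continuous_on (cball z0 R) (\<lambda>z. \<Sum>k\<in>{1..Mo}. norm (poly (\<rho> k) z))"
      by (intro continuous_intros)
    from cont_bound[OF this compact_cball] show ?thesis using that by blast
  qed
  have rb: "norm (poly (\<rho> k) z) \<le> P0" if "k \<in> {1..Mo}" "z \<in> ball z0 R" for k z
  proof -
    have "norm (poly (\<rho> k) z) \<le> (\<Sum>k\<in>{1..Mo}. norm (poly (\<rho> k) z))"
      by (rule member_le_sum) (use that in auto)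
    also have "\<dots> \<le> norm (\<Sum>k\<in>{1..Mo}. norm (poly (\<rho> k) z))" by simp
    also have "\<dots> \<le> P0" using P0(2) that(2) ball_subset_cball by blast
    finally show ?thesis .
  qed
  have form: "of_nat Mo * S n z = - S 0 z *
        (\<Sum>k\<in>{k\<in>{1..Mo}. Mo - k \<le> n}. poly (\<rho> k) z * wkb_Y (S(n := (\<lambda>_. 0))) k (n - (Mo - k)) z)"
    if "1 \<le> n" "z \<in> ball z0 R" for n z
    using S_formula[OF eq _ that(1) Mo lead] that bU by blast
  obtain \<gamma> K where gK: "0 < \<gamma>" "1 \<le> K"
    "\<And>n z. 1 \<le> n \<Longrightarrow> z \<in> ball z0 R \<Longrightarrow> norm (S n z) * (R - dist z0 z)^n \<le> \<gamma> * (K^n * fact n)"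
    using S_local_bound[of S z0 R Mo "\<lambda>k z. poly (\<rho> k) z" Q P0, OF holomorphic_on_subset[OF hol bU] form _ rb Q(1) P0(1) Mo]
      Q(2) by auto
  define A where "A = max Q \<gamma>"
  define C where "C = max 1 (2 * K / R)"
  have "gev S (ball z0 (R/2))"
    unfolding gev_def
  proof (rule exI[of _ A], rule exI[of _ C], intro conjI allI ballI)
    show "0 \<le> A" using Q A_def by simp
    show "1 \<le> C" using C_def by simp
    fix n y assume y: "y \<in> ball z0 (R/2)"
    then have "dist z0 y < R / 2" by simp
    then have "dist z0 y < R" using zero_le_dist[of z0 y] by linarith
    then have yR: "y \<in> ball z0 R" by simp
    have dy: "R / 2 \<le> R - dist z0 y" using y by simp
    show "norm (S n y) \<le> A * C^n * fact n"
    proof (cases "n = 0")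
      case True
      have "y \<in> cball z0 R" using yR by auto
      then have "norm (S 0 y) \<le> Q" using Q(2) by blast
      then show ?thesis using True A_def by simp
    next
      case False
      then have n: "1 \<le> n" by simp
      have "norm (S n y) * (R/2)^n \<le> norm (S n y) * (R - dist z0 y)^n"
        by (intro mult_left_mono power_mono) (use dy R in auto)
      also have "\<dots> \<le> \<gamma> * (K^n * fact n)" by (rule gK(3)[OF n yR])
      finally have "norm (S n y) \<le> \<gamma> * (K^n * fact n) / (R/2)^n"
        using R by (simp add: field_simps)
      also have "\<dots> = \<gamma> * (2 * K / R)^n * fact n"
        by (simp add: power_divide field_simps)
      also have "\<dots> \<le> A * C^n * fact n"
        by (intro mult_right_mono mult_mono power_mono) (use A_def C_def gK R in auto)
      finally show ?thesis .
    qed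
  qed
  moreover have "ball z0 (R/2) \<subseteq> U" using bU R(1) subset_ball[of "R/2" R z0] by auto
  ultimately show ?thesis using R by (intro exI[of _ "R/2"]) auto
qed

lemma gev_mono: "gev F B \<Longrightarrow> A \<subseteq> B \<Longrightarrow> gev F A"
  unfolding gev_def by blast

lemma gev_empty: "gev F {}"
  unfolding gev_def by (intro exI[of _ 0] exI[of _ 1]) auto

lemma gev_Un:
  assumes "gev F A" "gev F B"
  shows "gev F (A \<union> B)"
proof -
  obtain A1 C1 where 1: "0 \<le> A1" "1 \<le> C1" "\<forall>n. \<forall>y\<in>A. norm (F n y) \<le> A1 * C1^n * fact n"
    using assms(1) unfolding gev_def by blast
  obtain A2 C2 where 2: "0 \<le> A2" "1 \<le> C2" "\<forall>n. \<forall>y\<in>B. norm (F n y) \<le> A2 * C2^n * fact n"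
    using assms(2) unfolding gev_def by blast
  define C where "C = max C1 C2"
  have "\<forall>n. \<forall>y\<in>A \<union> B. norm (F n y) \<le> (A1 + A2) * C^n * fact n"
  proof (intro allI ballI)
    fix n y assume y: "y \<in> A \<union> B"
    have c1: "C1^n \<le> C^n" and c2: "C2^n \<le> C^n" unfolding C_def using 1 2 by (auto intro: power_mono)
    have Cp: "0 \<le> C^n" unfolding C_def using 1 by simp
    show "norm (F n y) \<le> (A1 + A2) * C^n * fact n"
    proof (cases "y \<in> A")
      case True
      have "norm (F n y) \<le> A1 * C1^n * fact n" using 1 True by blast
      also have "\<dots> \<le> (A1 + A2) * C^n * fact n"
        by (intro mult_mono c1) (use 1 2 Cp in auto)
      finally show ?thesis .
    next
      case False
      then have "y \<in> B" using y by blast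
      then have "norm (F n y) \<le> A2 * C2^n * fact n" using 2 by blast
      also have "\<dots> \<le> (A1 + A2) * C^n * fact n"
        by (intro mult_mono c2) (use 1 2 Cp in auto)
      finally show ?thesis .
    qed
  qed
  then show ?thesis unfolding gev_def using 1 2 C_def
    by (intro exI[of _ "A1 + A2"] exI[of _ C]) auto
qed

lemma gev_finite_Un: "finite I \<Longrightarrow> (\<And>i. i \<in> I \<Longrightarrow> gev F (B i)) \<Longrightarrow> gev F (\<Union>i\<in>I. B i)"
  by (induction I rule: finite_induct) (auto intro: gev_empty gev_Un)

lemma gev_compact:
  assumes K: "compact K" and loc: "\<And>z. z \<in> K \<Longrightarrow> \<exists>r>0. gev F (ball z r)"
  shows "gev F K"
proof -
  have "\<forall>z\<in>K. \<exists>r. r > 0 \<and> gev F (ball z r)" using loc by blast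
  then obtain rr where rr0: "\<forall>z\<in>K. rr z > 0 \<and> gev F (ball z (rr z))"
    using bchoice[of K "\<lambda>z r. r > 0 \<and> gev F (ball z r)"] by blast
  then have rr: "\<And>z. z \<in> K \<Longrightarrow> rr z > 0 \<and> gev F (ball z (rr z))" by blast
  have "K \<subseteq> (\<Union>z\<in>K. ball z (rr z))" using rr by auto
  then obtain K' where K': "K' \<subseteq> K" "finite K'" "K \<subseteq> (\<Union>z\<in>K'. ball z (rr z))"
    using compactE_image[OF K, of K "\<lambda>z. ball z (rr z)"] by auto
  have "gev F (\<Union>z\<in>K'. ball z (rr z))"
    by (rule gev_finite_Un[OF K'(2)]) (use rr K'(1) in auto)
  then show ?thesis using K'(3) gev_mono by blast
qed

lemma gev_transfer:
  fixes G S :: "nat \<Rightarrow> complex \<Rightarrow> complex"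
  assumes r: "0 < r" and sub: "ball z r \<subseteq> U"
    and der: "\<And>k y. y \<in> U \<Longrightarrow> (G k has_field_derivative S k y) (at y)"
    and gS: "gev S (ball z r)" and w: "w \<in> ball z r"
    and wb: "0 \<le> A0" "1 \<le> C0" "\<And>n. norm (G n w) \<le> A0 * C0^n * fact n"
  shows "gev G (ball z r)"
proof -
  obtain A1 C1 where 1: "0 \<le> A1" "1 \<le> C1" "\<forall>n. \<forall>y\<in>ball z r. norm (S n y) \<le> A1 * C1^n * fact n"
    using gS unfolding gev_def by blast
  define C where "C = max C0 C1"
  have "\<forall>n. \<forall>y\<in>ball z r. norm (G n y) \<le> (A0 + 2 * r * A1) * C^n * fact n"
  proof (intro allI ballI)
    fix n y assume y: "y \<in> ball z r"
    have c0: "C0^n \<le> C^n" and c1: "C1^n \<le> C^n" unfolding C_def using 1 wb by (auto intro: power_mono)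
    have a: "norm (G n y - G n w) \<le> (A1 * C1^n * fact n) * norm (y - w)"
    proof (rule field_differentiable_bound[OF convex_ball])
      fix x assume x: "x \<in> ball z r"
      show "(G n has_field_derivative S n x) (at x within ball z r)"
      proof -
        have "x \<in> U" using x sub by blast
        then show ?thesis by (rule has_field_derivative_at_within[OF der])
      qed
      show "norm (S n x) \<le> A1 * C1^n * fact n" using 1 x by blast
    qed (use y w in auto)
    have b: "norm (y - w) \<le> 2 * r"
    proof -
      have "norm (y - w) \<le> dist z y + dist z w"
        using dist_triangle[of y w z] by (simp add: dist_commute dist_norm[symmetric])
      then show ?thesis using y w by simp
    qed
    have "norm (G n y - G n w) \<le> (A1 * C1^n * fact n) * (2 * r)"
    proof -
      have B0: "0 \<le> A1 * C1^n * fact n" using 1 by simp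
      have "(A1 * C1^n * fact n) * norm (y - w) \<le> (A1 * C1^n * fact n) * (2 * r)"
        by (rule mult_left_mono[OF b B0])
      then show ?thesis using a by linarith
    qed
    then have "norm (G n y) \<le> norm (G n w) + (A1 * C1^n * fact n) * (2 * r)"
      using norm_triangle_ineq2[of "G n y" "G n w"] by linarith
    also have "\<dots> \<le> A0 * C^n * fact n + (2 * r * A1) * C^n * fact n"
    proof (rule add_mono)
      show "norm (G n w) \<le> A0 * C^n * fact n"
        using wb(3)[of n] mult_right_mono[OF mult_left_mono[OF c0 wb(1)], of "fact n"] by simp
      show "A1 * C1 ^ n * fact n * (2 * r) \<le> 2 * r * A1 * C ^ n * fact n"
        using mult_right_mono[OF mult_left_mono[OF c1, of "2 * r * A1"], of "fact n"] 1 r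
        by (simp add: mult_ac)
    qed
    also have "\<dots> = (A0 + 2 * r * A1) * C^n * fact n" by (simp add: algebra_simps)
    finally show "norm (G n y) \<le> (A0 + 2 * r * A1) * C^n * fact n" .
  qed
  then show ?thesis unfolding gev_def using 1 wb r C_def
    by (intro exI[of _ "A0 + 2 * r * A1"] exI[of _ C]) auto
qed

lemma G_gev_all:
  fixes G S :: "nat \<Rightarrow> complex \<Rightarrow> complex"
  assumes U: "open U" "connected U" and zs: "zs \<in> U"
    and der: "\<And>k y. y \<in> U \<Longrightarrow> (G k has_field_derivative S k y) (at y)"
    and base: "\<And>k. G k zs = 0"
    and locS: "\<And>z. z \<in> U \<Longrightarrow> \<exists>r>0. ball z r \<subseteq> U \<and> gev S (ball z r)"
  shows "\<And>z. z \<in> U \<Longrightarrow> \<exists>r>0. gev G (ball z r)"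
proof -
  define good where "good z \<longleftrightarrow> (\<exists>r>0. ball z r \<subseteq> U \<and> gev G (ball z r))" for z
  have trans: "good z" if z: "z \<in> U" and w: "\<exists>r>0. ball z r \<subseteq> U \<and> gev S (ball z r) \<and> w \<in> ball z r"
    and wb: "\<exists>A0 C0. 0 \<le> A0 \<and> 1 \<le> C0 \<and> (\<forall>n. norm (G n w) \<le> A0 * C0^n * fact n)" for z w
  proof -
    obtain r where r: "r > 0" "ball z r \<subseteq> U" "gev S (ball z r)" "w \<in> ball z r" using w by blast
    obtain A0 C0 where a: "0 \<le> A0" "1 \<le> C0" "\<And>n. norm (G n w) \<le> A0 * C0^n * fact n" using wb by blast
    show ?thesis unfolding good_def using gev_transfer[OF r(1) r(2) der r(3) r(4) a] r by blast
  qed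
  have ptw: "\<exists>A0 C0. 0 \<le> A0 \<and> 1 \<le> C0 \<and> (\<forall>n. norm (G n w) \<le> A0 * C0^n * fact n)" if gw: "good w" for w
  proof -
    from gw have "\<exists>r>0. ball w r \<subseteq> U \<and> gev G (ball w r)" unfolding good_def .
    then obtain r where r: "r > 0" "gev G (ball w r)" by blast
    from r(2) obtain A C where AC: "0 \<le> A" "1 \<le> C" "\<forall>n. \<forall>y\<in>ball w r. norm (G n y) \<le> A * C^n * fact n"
      unfolding gev_def by blast
    have "w \<in> ball w r" using r(1) by simp
    then have "\<forall>n. norm (G n w) \<le> A * C^n * fact n" using AC(3) by blast
    then show ?thesis using AC(1,2) by blast
  qed
  define Good where "Good = {z\<in>U. good z}"
  define Bad where "Bad = {z\<in>U. \<not> good z}"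
  have oGood: "open Good" unfolding open_contains_ball
  proof
    fix z assume "z \<in> Good"
    then obtain r where r: "r > 0" "ball z r \<subseteq> U" "gev G (ball z r)" unfolding Good_def good_def by blast
    have "ball z r \<subseteq> Good"
    proof
      fix y assume y: "y \<in> ball z r"
      define e where "e = r - dist z y"
      have e: "e > 0" using y e_def by simp
      have "ball y e \<subseteq> ball z r"
      proof
        fix x assume "x \<in> ball y e"
        then have "dist y x < e" by simp
        then have "dist z x < r" using dist_triangle[of z x y] e_def by linarith
        then show "x \<in> ball z r" by simp
      qed

      then have "ball y e \<subseteq> U" "gev G (ball y e)" using r(2) gev_mono[OF r(3)] by auto
      then have "good y" unfolding good_def using e by blast
      then show "y \<in> Good" using y r Good_def by auto
    qed
    then show "\<exists>e>0. ball z e \<subseteq> Good" using r by blast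
  qed
  have oBad: "open Bad" unfolding open_contains_ball
  proof
    fix z assume z: "z \<in> Bad"
    then have zU: "z \<in> U" and ng: "\<not> good z" unfolding Bad_def by auto
    obtain r where r: "r > 0" "ball z r \<subseteq> U" "gev S (ball z r)" using locS[OF zU] by blast
    have "ball z r \<subseteq> Bad"
    proof
      fix y assume y: "y \<in> ball z r"
      have "\<not> good y"
      proof
        assume "good y"
        then have "\<exists>A0 C0. 0 \<le> A0 \<and> 1 \<le> C0 \<and> (\<forall>n. norm (G n y) \<le> A0 * C0^n * fact n)" by (rule ptw)
        moreover have "\<exists>r>0. ball z r \<subseteq> U \<and> gev S (ball z r) \<and> y \<in> ball z r" using r y by blast
        ultimately have "good z" using trans[OF zU] by blast
        then show False using ng by blast
      qed
      then show "y \<in> Bad" using y r Bad_def by auto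
    qed
    then show "\<exists>e>0. ball z e \<subseteq> Bad" using r by blast
  qed
  have gzs: "good zs"
  proof -
    obtain r where r: "r > 0" "ball zs r \<subseteq> U" "gev S (ball zs r)" using locS[OF zs] by blast
    have a: "\<exists>r>0. ball zs r \<subseteq> U \<and> gev S (ball zs r) \<and> zs \<in> ball zs r" using r by auto
    have b: "\<exists>A0 C0. 0 \<le> A0 \<and> 1 \<le> C0 \<and> (\<forall>n. norm (G n zs) \<le> A0 * C0^n * fact n)"
      by (rule exI[of _ 0], rule exI[of _ 1]) (simp add: base)
    show ?thesis by (rule trans[OF zs a b])
  qed
  have "Good \<inter> U = {} \<or> Bad \<inter> U = {}"
    by (rule connectedD[OF U(2) oGood oBad]) (auto simp: Good_def Bad_def)
  then have "Bad \<inter> U = {}" using gzs zs Good_def by auto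
  then have "good z" if "z \<in> U" for z using that Bad_def by auto
  then show "\<And>z. z \<in> U \<Longrightarrow> \<exists>r>0. gev G (ball z r)" unfolding good_def by blast
qed

lemma fact_Suc_le: "fact (Suc m) \<le> (2::real)^m * fact m"
proof -
  have "real (Suc m) \<le> 2^m"
    by (induction m) (auto simp: of_nat_le_iff)
  then have "real (Suc m) * fact m \<le> 2^m * fact m" by (intro mult_right_mono) auto
  then show ?thesis by simp
qed

lemma H_hol:
  fixes G :: "nat \<Rightarrow> complex \<Rightarrow> complex"
  assumes U: "open U" and hG: "\<And>k. G k holomorphic_on U"
  shows "(\<lambda>z. fps_nth (fps_compose (fps_exp 1) (Abs_fps (\<lambda>m. if m = 0 then 0 else G (m + 1) z))) n) holomorphic_on U"
proof (induction n rule: less_induct)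
  case (less n)
  define g where "g z = Abs_fps (\<lambda>m. if m = 0 then 0 else G (m + 1) z)" for z
  have g0: "g z $ 0 = 0" for z by (simp add: g_def)
  show ?case
  proof (cases n)
    case 0
    then show ?thesis using exp_comp_0[OF g0] g_def by simp
  next
    case (Suc m)
    have IH: "(\<lambda>z. (fps_exp 1 oo g z) $ i) holomorphic_on U" if "i \<le> m" for i
      using less.IH[of i] that Suc g_def by simp
    have eq: "(fps_exp 1 oo g z) $ Suc m = (\<Sum>i=0..m. (fps_exp 1 oo g z)$i * (of_nat (m - i + 1) * G (m - i + 2) z)) / of_nat (Suc m)" for z
    proof -
      have "of_nat (Suc m) * (fps_exp 1 oo g z)$(Suc m) = (\<Sum>i=0..m. (fps_exp 1 oo g z)$i * (of_nat (m - i + 1) * g z $(m - i + 1)))"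
        by (rule exp_comp_rec[OF g0])
      also have "\<dots> = (\<Sum>i=0..m. (fps_exp 1 oo g z)$i * (of_nat (m - i + 1) * G (m - i + 2) z))"
        by (intro sum.cong) (auto simp: g_def)
      finally show ?thesis by (simp add: field_simps del: of_nat_Suc)
    qed
    have "(\<lambda>z. (\<Sum>i=0..m. (fps_exp 1 oo g z)$i * (of_nat (m - i + 1) * G (m - i + 2) z)) / of_nat (Suc m)) holomorphic_on U"
      by (intro holomorphic_intros IH hG) auto
    then show ?thesis using Suc eq g_def by simp
  qed
qed

theorem lemma6:
  fixes \<rho> :: "nat \<Rightarrow> complex poly" and Mo :: nat and \<mu> :: "complex measure"
    and w1 :: "complex \<Rightarrow> complex" and U :: "complex set" and zs :: complex
    and j :: nat and S G :: "nat \<Rightarrow> complex \<Rightarrow> complex"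
  assumes ord: "Mo \<ge> 2"
    and es: "nondeg_exactly_solvable \<rho> Mo"
    and mu: "is_root_limit_measure \<rho> Mo \<mu>"
    and w1_hol: "w1 holomorphic_on (- msupp \<mu>)"
    and w1_root: "\<forall>z\<in>- msupp \<mu>. poly (\<rho> Mo) z * w1 z ^ Mo = 1"
    and w1_inf: "((\<lambda>z. z * w1 z) \<longlongrightarrow> 1) at_infinity"
    and U: "open U" "simply_connected U" "U \<subseteq> - msupp \<mu>"
    and zs: "zs \<in> U"
    and j: "j \<in> {1..Mo}"
    and S0: "\<forall>z\<in>U. S 0 z = exp (2 * pi * \<i> * of_nat (j - 1) / of_nat Mo) * w1 z"
    and S_hol: "\<forall>k. S k holomorphic_on U"
    and S_eq: "wkb_eq \<rho> Mo U S"
    and G_prim: "\<forall>k. \<forall>z\<in>U. (G k has_field_derivative S k z) (at z)"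
    and G_base: "\<forall>k. G k zs = 0"
  shows "pre_borel_summable U (G 0) (wkb_f G)"
proof -
  have Mo1: "1 \<le> Mo" using ord by simp
  define \<omega> :: complex where "\<omega> = exp (2 * pi * \<i> * of_nat (j - 1) / of_nat Mo)"
  have om: "\<omega> ^ Mo = 1"
  proof -
    have "\<omega> ^ Mo = exp (of_nat Mo * (2 * pi * \<i> * of_nat (j - 1) / of_nat Mo))"
      unfolding \<omega>_def by (rule exp_of_nat_mult[symmetric])
    also have "of_nat Mo * (2 * pi * \<i> * of_nat (j - 1) / of_nat Mo) = \<i> * (of_nat (j - 1) * (of_real pi * 2))"
      using Mo1 by (simp add: field_simps)
    also have "exp \<dots> = 1" by (rule exp_2pi_1_nat)
    finally show ?thesis .
  qed
  have lead: "poly (\<rho> Mo) z * S 0 z ^ Mo = 1" if z: "z \<in> U" for z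
  proof -
    have "S 0 z ^ Mo = w1 z ^ Mo" using S0 z om unfolding \<omega>_def by (simp add: power_mult_distrib)
    then show ?thesis using w1_root z U(3) by auto
  qed
  have hS: "\<And>k. S k holomorphic_on U" using S_hol by blast
  have der: "\<And>k y. y \<in> U \<Longrightarrow> (G k has_field_derivative S k y) (at y)" using G_prim by blast
  have locS: "\<exists>r>0. ball z r \<subseteq> U \<and> gev S (ball z r)" if "z \<in> U" for z
    by (rule local_gev[OF U(1) hS S_eq lead Mo1 that])
  have conn: "connected U" using U(2) by (rule simply_connected_imp_connected)
  have locG: "\<And>z. z \<in> U \<Longrightarrow> \<exists>r>0. gev G (ball z r)"
    by (rule G_gev_all[OF U(1) conn zs der _ locS]) (use G_base in auto)
  have hG: "\<And>k. G k holomorphic_on U"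
    using der U(1) by (auto simp: holomorphic_on_open)
  define H where "H n z = fps_nth (fps_compose (fps_exp 1) (Abs_fps (\<lambda>m. if m = 0 then 0 else G (m + 1) z))) n" for n z
  have fH: "wkb_f G n z = exp (G 1 z) * H n z" for n z unfolding wkb_f_def H_def by simp
  have hH: "(H n) holomorphic_on U" for n
    unfolding H_def by (rule H_hol[OF U(1) hG])
  show ?thesis unfolding pre_borel_summable_def
  proof (intro conjI allI impI)
    show "G 0 holomorphic_on U" by (rule hG)
    fix n show "wkb_f G n holomorphic_on U"
      unfolding fH[abs_def] by (intro holomorphic_intros hG hH)
  next
    fix K :: "complex set" assume K: "compact K \<and> K \<subseteq> U"
    have "gev G K" by (rule gev_compact) (use K locG in auto)
    then obtain A C where AC: "0 \<le> A" "1 \<le> C" "\<And>n y. y \<in> K \<Longrightarrow> norm (G n y) \<le> A * C^n * fact n"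
      unfolding gev_def by blast
    have ce: "continuous_on K (\<lambda>z. exp (G 1 z))"
      using K by (intro continuous_intros holomorphic_on_imp_continuous_on holomorphic_on_subset[OF hG]) auto
    obtain B where B: "B \<ge> 0" "\<forall>z\<in>K. norm (exp (G 1 z)) \<le> B"
      using cont_bound[OF ce] K by blast
    define D where "D = 2 * C * (A * C + 1)"
    have Hb: "norm (H n y) \<le> D^n * fact n" if y: "y \<in> K" for n y
    proof -
      define g where "g = Abs_fps (\<lambda>m. if m = 0 then 0 else G (m + 1) y)"
      have gb: "norm (g $ m) \<le> (A * C) * (2 * C)^m * fact m" for m
      proof (cases "m = 0")
        case True then show ?thesis using AC by (simp add: g_def)
      next
        case False
        then have "norm (g $ m) = norm (G (Suc m) y)" by (simp add: g_def)
        also have "\<dots> \<le> A * C^(Suc m) * fact (Suc m)" using AC(3) y by blast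
        also have "\<dots> \<le> A * C^(Suc m) * (2^m * fact m)"
          by (intro mult_left_mono fact_Suc_le) (use AC in auto)
        also have "\<dots> = (A * C) * (2 * C)^m * fact m" by (simp add: power_mult_distrib mult_ac)
        finally show ?thesis .
      qed
      have "norm ((fps_exp 1 oo g) $ n) \<le> ((2 * C) * (A * C + 1))^n * fact n"
        by (rule exp_gevrey) (use gb AC in \<open>auto simp: g_def\<close>)
      then show ?thesis unfolding H_def D_def g_def by simp
    qed
    show "\<exists>A C::real. \<forall>n. \<forall>z\<in>K. norm (wkb_f G n z) < A * C ^ n * fact n"
    proof (rule exI[of _ "B + 1"], rule exI[of _ D], intro allI ballI)
      fix n z assume z: "z \<in> K"
      have "0 \<le> A * C" using AC by simp
      then have "0 < D" using AC D_def by (simp add: add_nonneg_pos)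
      then have Dp: "0 < D^n * fact n" by simp
      have "norm (wkb_f G n z) = norm (exp (G 1 z)) * norm (H n z)" by (simp add: fH norm_mult)
      also have "\<dots> \<le> B * (D^n * fact n)"
        by (intro mult_mono Hb z) (use B z in auto)
      also have "\<dots> < (B + 1) * (D^n * fact n)" using Dp by (simp add: distrib_right)
      finally show "norm (wkb_f G n z) < (B + 1) * D ^ n * fact n" by (simp add: mult_ac)
    qed
  qed
qed

end
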